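(* Let $n\ge2$ be even and let $\mathcal{D}_{S_1},\mathcal{D}_{S_2}\subseteq\mathcal{D}_{[n]}\setminus\{n\}$. If $\mathrm{Spec}(\mathrm{ICG}(n,\mathcal{D}_{S_1}))=\mathrm{Spec}(\mathrm{ICG}(n,\mathcal{D}_{S_2}))$, then $n/2\notin\mathcal{D}_{S_1}\triangle\mathcal{D}_{S_2}$ (symmetric difference).
   Context: Identify $\mathbb{Z}_n$ with $[n]=\{1,\dots,n\}$. For a divisor $d$ of $n$, $G_n(d)=\{j\in[n]:\gcd(j,n)=d\}$; $\mathcal{D}_{[n]}$ is the set of positive divisors of $n$. For $\mathcal{D}\subseteq\mathcal{D}_{[n]}\setminus\{n\}$, $\mathrm{ICG}(n,\mathcal{D})=\mathrm{Cay}(\mathbb{Z}_n,S)$ with $S=\bigcup_{d\in\mathcal{D}}G_n(d)$, and $\mathcal{D}=\mathcal{D}_S$. $\mathrm{Spec}$ is the multiset of adjacency eigenvalues. *)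

theory Defs
  imports "Jordan_Normal_Form.Char_Poly"
begin

text \<open>Z_n is identified with [n] = {1..n}; residue 0 corresponds to n.\<close>

definition G :: "nat \<Rightarrow> nat \<Rightarrow> nat set" where
  "G n d = {j \<in> {1..n}. gcd j n = d}"

definition divisors :: "nat \<Rightarrow> nat set" where
  "divisors n = {d. 0 < d \<and> d dvd n}"

definition ICG_S :: "nat \<Rightarrow> nat set \<Rightarrow> nat set" where
  "ICG_S n D = (\<Union>d\<in>D. G n d)"

definition to_n :: "nat \<Rightarrow> nat \<Rightarrow> nat" where
  "to_n n r = (if r mod n = 0 then n else r mod n)"

text \<open>Adjacency matrix of Cay(Z_n, S): rows/columns indexed by 0..n-1
  (vertex i stands for residue i), i adjacent to j iff j - i is in S.\<close>
definition cay_adj :: "nat \<Rightarrow> nat set \<Rightarrow> complex mat" where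
  "cay_adj n S = mat n n (\<lambda>(i, j). if to_n n (j + n - i) \<in> S then 1 else 0)"

definition ICG_adj :: "nat \<Rightarrow> nat set \<Rightarrow> complex mat" where
  "ICG_adj n D = cay_adj n (ICG_S n D)"

definition Spec :: "complex mat \<Rightarrow> complex multiset" where
  "Spec A = (THE M. char_poly A = (\<Prod>a\<in>#M. [:- a, 1:]))"

end

theory Submission
  imports Defs "Jordan_Normal_Form.Schur_Decomposition" "HOL-Number_Theory.Cong"
begin


lemma order_prod_lin: "Polynomial.order a (\<Prod>b\<in>#M. [:-b,1:]) = count M (a::complex)"
proof (induction M)
  case empty then show ?case by simp
next
  case (add x M)
  have nz: "(\<Prod>b\<in>#M. [:-b,1:]) \<noteq> (0::complex poly)"
    by (auto simp: prod_mset_zero_iff)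
  have "Polynomial.order a ([:-x,1:] * (\<Prod>b\<in>#M. [:-b,1:])) = Polynomial.order a [:-x,1:] + Polynomial.order a (\<Prod>b\<in>#M. [:-b,1:])"
    by (rule Polynomial.order_mult) (metis nz mult_eq_0_iff pCons_eq_0_iff one_neq_zero)
  moreover have "Polynomial.order a [:-x,1:] = (if a = x then 1 else 0)"
    using order_power_n_n[of a 1] by (auto intro: order_0I)
  ultimately show ?case using add by simp
qed

lemma prod_lin_inj:
  assumes "(\<Prod>b\<in>#M. [:-b,1:]) = (\<Prod>b\<in>#N. [:-b,1:] :: complex poly)"
  shows "M = N"
  by (metis assms multiset_eqI order_prod_lin)

lemma Spec_eq:
  assumes "char_poly A = (\<Prod>a\<leftarrow>es. [:- a, 1:])"
  shows "Spec A = mset es"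
proof -
  have e: "char_poly A = (\<Prod>b\<in>#mset es. [:-b,1:])"
    using assms by (metis mset_map prod_mset_prod_list)
  show ?thesis unfolding Spec_def
    by (rule the_equality) (use e prod_lin_inj in auto)
qed

definition mtr :: "complex mat \<Rightarrow> complex" where
  "mtr M = (\<Sum>i<dim_row M. M $$ (i,i))"

lemma mtr_comm:
  assumes "X \<in> carrier_mat n m" "Y \<in> carrier_mat m n"
  shows "mtr (X * Y) = mtr (Y * X)"
proof -
  have "mtr (X*Y) = (\<Sum>i<n. \<Sum>k<m. X$$(i,k) * Y$$(k,i))"
    using assms unfolding mtr_def
    by (auto simp: scalar_prod_def sum.atLeast0_lessThan_Suc lessThan_atLeast0 intro!: sum.cong)
  also have "\<dots> = (\<Sum>k<m. \<Sum>i<n. Y$$(k,i) * X$$(i,k))"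
    by (subst sum.swap) (simp add: mult.commute)
  also have "\<dots> = mtr (Y*X)"
    using assms unfolding mtr_def
    by (auto simp: scalar_prod_def lessThan_atLeast0 intro!: sum.cong)
  finally show ?thesis .
qed

lemma mtr_upper_sq:
  assumes "B \<in> carrier_mat n n" "upper_triangular B"
  shows "mtr (B * B) = (\<Sum>i<n. (B$$(i,i))^2)"
proof -
  have "mtr (B*B) = (\<Sum>i<n. \<Sum>k<n. B$$(i,k) * B$$(k,i))"
    using assms unfolding mtr_def
    by (auto simp: scalar_prod_def lessThan_atLeast0 intro!: sum.cong)
  also have "\<dots> = (\<Sum>i<n. (B$$(i,i))^2)"
  proof (rule sum.cong[OF refl])
    fix i assume i: "i \<in> {..<n}"
    have "(\<Sum>k<n. B$$(i,k) * B$$(k,i)) = (\<Sum>k\<in>{i}. B$$(i,k) * B$$(k,i))"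
    proof (rule sum.mono_neutral_right)
      show "\<forall>k\<in>{..<n} - {i}. B $$ (i, k) * B $$ (k, i) = 0"
        using assms i unfolding upper_triangular_def
        by (metis Diff_iff carrier_matD(1) insertI1 lessThan_iff linorder_neqE_nat mult_eq_0_iff)
    qed (use i in auto)
    then show "(\<Sum>k<n. B$$(i,k) * B$$(k,i)) = (B$$(i,i))^2" by (simp add: power2_eq_square)
  qed
  finally show ?thesis .
qed

lemma Spec_sq:
  assumes A: "A \<in> carrier_mat n n"
  shows "(\<Sum>x\<in>#Spec A. x^2) = mtr (A * A)"
proof -
  obtain es where es: "char_poly A = (\<Prod>a\<leftarrow>es. [:- a, 1:])" "length es = n"
    using char_poly_factorized[OF A] by blast
  obtain B P Q where bpq: "schur_decomposition A es = (B,P,Q)"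
    by (cases "schur_decomposition A es") auto
  from schur_decomposition[OF A es(1) bpq]
  have sim: "similar_mat_wit A B P Q" and ut: "upper_triangular B" and dg: "diag_mat B = es"
    by auto
  note w = similar_mat_witD2[OF A sim]
  have QP: "Q * (P * X) = X" if "X \<in> carrier_mat n m" for X m
  proof -
    have "Q * (P * X) = (Q * P) * X" by (rule assoc_mult_mat[of Q n n P n X m, symmetric]) (use w that in auto)
    also have "\<dots> = X" using w that by simp
    finally show ?thesis .
  qed
  have "A * A = P * (B * B) * Q"
  proof -
    have "A * A = P * (B * (Q * (P * (B * Q))))" using w by (simp add: assoc_mult_mat[of _ n n _ n _ n])
    also have "\<dots> = P * (B * (B * Q))" using w QP[of "B * Q" n] by simp
    also have "\<dots> = P * (B * B) * Q" using w by (simp add: assoc_mult_mat[of _ n n _ n _ n])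
    finally show ?thesis .
  qed
  hence "mtr (A*A) = mtr ((P * (B * B)) * Q)" by simp
  also have "\<dots> = mtr (Q * (P * (B * B)))"
    by (rule mtr_comm[of _ n n]) (use w in auto)
  also have "Q * (P * (B * B)) = B * B"
    using QP[of "B * B" n] w by simp
  also have "mtr (B*B) = (\<Sum>i<n. (B$$(i,i))^2)"
    by (rule mtr_upper_sq) (use w ut in auto)
  also have "\<dots> = (\<Sum>x\<in>#mset es. x^2)"
  proof -
    have "es = map (\<lambda>i. B$$(i,i)) [0..<n]" using dg w unfolding diag_mat_def by auto
    have "(\<Sum>x\<in>#mset es. x^2) = sum_list (map (\<lambda>x. x^2) es)"
      by (metis mset_map sum_mset_sum_list)
    also have "\<dots> = sum_list (map (\<lambda>i. (B$$(i,i))^2) [0..<n])"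
      using \<open>es = _\<close> by (simp add: comp_def)
    also have "\<dots> = (\<Sum>i<n. (B$$(i,i))^2)"
      by (simp add: sum_list_distinct_conv_sum_set atLeast0LessThan)
    finally show ?thesis by simp
  qed
  finally show ?thesis using Spec_eq[OF es(1)] by simp
qed



lemma S_char: "ICG_S n D = {s\<in>{1..n}. gcd s n \<in> D}"
  unfolding ICG_S_def G_def by auto

lemma gcd_to_n: "0 < n \<Longrightarrow> gcd (to_n n r) n = gcd r n"
  unfolding to_n_def
  by (auto simp: gcd.commute gcd_red_nat[of n r] dvd_eq_mod_eq_0)

lemma to_n_range: "0 < n \<Longrightarrow> to_n n r \<in> {1..n}"
  unfolding to_n_def by auto

lemma to_n_mem: "0 < n \<Longrightarrow> (to_n n r \<in> ICG_S n D) = (gcd r n \<in> D)"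
  using to_n_range[of n r] gcd_to_n[of n r] by (auto simp: S_char)

lemma gcd_compl: assumes "a + x = 2 * (n::nat)" shows "gcd a n = gcd x n"
proof (rule dvd_antisym)
  show "gcd a n dvd gcd x n"
  proof -
    have "gcd a n dvd 2 * n - a" by (intro dvd_diff_nat) auto
    moreover have "2 * n - a = x" using assms by simp
    ultimately show ?thesis by simp
  qed
  show "gcd x n dvd gcd a n"
  proof -
    have "gcd x n dvd 2 * n - x" by (intro dvd_diff_nat) auto
    moreover have "2 * n - x = a" using assms by simp
    ultimately show ?thesis by simp
  qed
qed

lemma gcd_compl1: assumes "a + x = (n::nat)" shows "gcd a n = gcd x n"
proof (rule dvd_antisym)
  show "gcd a n dvd gcd x n"
  proof -
    have "gcd a n dvd n - a" by (intro dvd_diff_nat) auto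
    moreover have "n - a = x" using assms by simp
    ultimately show ?thesis by simp
  qed
  show "gcd x n dvd gcd a n"
  proof -
    have "gcd x n dvd n - x" by (intro dvd_diff_nat) auto
    moreover have "n - x = a" using assms by simp
    ultimately show ?thesis by simp
  qed
qed

lemma gcd_sym: assumes "i < n" "j < n" shows "gcd (i + n - j) n = gcd (j + n - i) (n::nat)"
  by (rule gcd_compl) (use assms in simp)

lemma to_n_id: "s \<in> {1..n} \<Longrightarrow> to_n n s = s"
  unfolding to_n_def by (cases "s = n") auto

lemma to_n_eq: "0 < n \<Longrightarrow> to_n n a = to_n n b \<Longrightarrow> a mod n = b mod n"
  using mod_less_divisor[of n a] mod_less_divisor[of n b]
  unfolding to_n_def by (cases "a mod n = 0"; cases "b mod n = 0") (auto simp del: mod_less_divisor)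

lemma to_n_inj: assumes "i < n" "j < n" "k < n" "to_n n (j + n - i) = to_n n (k + n - i)" shows "j = k"
proof -
  have h: "(j + n - i) mod n = (k + n - i) mod n" using to_n_eq[of n "j + n - i" "k + n - i"] assms by simp
  have "(j + n - i + i) mod n = ((j + n - i) mod n + i) mod n" by (rule mod_add_left_eq[symmetric])
  also have "\<dots> = ((k + n - i) mod n + i) mod n" using h by simp
  also have "\<dots> = (k + n - i + i) mod n" by (rule mod_add_left_eq)
  finally have "[j + n - i + i = k + n - i + i] (mod n)" unfolding cong_def .
  hence "[j + n = k + n] (mod n)" using assms by simp
  hence "[j = k] (mod n)" by (simp add: cong_add_rcancel_nat)
  thus ?thesis using assms by (simp add: cong_def)
qed

lemma to_n_surj: assumes "i < n" "s \<in> {1..n}" shows "to_n n ((s + i) mod n + n - i) = s"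
proof -
  have "[(s + i) mod n + n - i + i = s + i] (mod n)" using assms
    by (simp add: cong_def)
  hence "[(s + i) mod n + n - i = s] (mod n)" by (simp add: cong_add_rcancel_nat)
  hence "to_n n ((s + i) mod n + n - i) = to_n n s" unfolding to_n_def cong_def by simp
  thus ?thesis using to_n_id[OF assms(2)] by simp
qed

lemma adj_entry:
  assumes "i < n" "j < n"
  shows "ICG_adj n D $$ (i,j) = (if gcd (j + n - i) n \<in> D then 1 else 0)"
  using assms to_n_mem[of n "j + n - i" D] unfolding ICG_adj_def cay_adj_def by auto

lemma ICG_adj_carrier: "ICG_adj n D \<in> carrier_mat n n"
  unfolding ICG_adj_def cay_adj_def by auto

lemma row_count:
  assumes "i < n"
  shows "card {j\<in>{..<n}. gcd (j + n - i) n \<in> D} = card (ICG_S n D)"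
proof -
  let ?f = "\<lambda>j. to_n n (j + n - i)"
  have inj: "inj_on ?f {j\<in>{..<n}. gcd (j + n - i) n \<in> D}"
    by (rule inj_onI) (use assms to_n_inj in auto)
  have img: "?f ` {j\<in>{..<n}. gcd (j + n - i) n \<in> D} = ICG_S n D"
  proof
    show "?f ` {j\<in>{..<n}. gcd (j + n - i) n \<in> D} \<subseteq> ICG_S n D"
      using assms to_n_mem[of n _ D] by auto
    show "ICG_S n D \<subseteq> ?f ` {j\<in>{..<n}. gcd (j + n - i) n \<in> D}"
    proof
      fix s assume s: "s \<in> ICG_S n D"
      hence s1: "s \<in> {1..n}" by (simp add: S_char)
      let ?j = "(s + i) mod n"
      have fj: "?f ?j = s" using to_n_surj[OF assms s1] .
      have "?j < n" using assms by simp
      moreover have "gcd (?j + n - i) n \<in> D"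
        using s fj to_n_mem[of n "?j + n - i" D] assms by auto
      ultimately show "s \<in> ?f ` {j\<in>{..<n}. gcd (j + n - i) n \<in> D}"
        using fj by (metis (mono_tags, lifting) image_eqI lessThan_iff mem_Collect_eq)
    qed
  qed
  show ?thesis using card_image[OF inj] img by simp
qed

lemma mtr_ICG: "mtr (ICG_adj n D * ICG_adj n D) = of_nat (n * card (ICG_S n D))"
proof -
  let ?A = "ICG_adj n D"
  have "mtr (?A * ?A) = (\<Sum>i<n. \<Sum>j<n. ?A$$(i,j) * ?A$$(j,i))"
    using ICG_adj_carrier[of n D] unfolding mtr_def
    by (auto simp: scalar_prod_def lessThan_atLeast0 intro!: sum.cong)
  also have "\<dots> = (\<Sum>i<n. \<Sum>j<n. if gcd (j + n - i) n \<in> D then 1 else 0)"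
    by (intro sum.cong refl) (auto simp: adj_entry gcd_sym)
  also have "\<dots> = (\<Sum>i<n. of_nat (card (ICG_S n D)))"
    by (intro sum.cong refl) (auto simp: sum.If_cases row_count[symmetric] intro!: arg_cong[where f=card])
  also have "\<dots> = of_nat (n * card (ICG_S n D))" by simp
  finally show ?thesis .
qed

lemma parity:
  assumes n2: "n \<ge> 2" and ev: "even n" and D: "D \<subseteq> divisors n - {n}"
  shows "card (ICG_S n D) = 2 * card {s\<in>ICG_S n D. s < n div 2} + (if n div 2 \<in> D then 1 else 0)"
proof -
  let ?S = "ICG_S n D" and ?h = "n div 2"
  let ?L = "{s\<in>?S. s < ?h}" and ?R = "{s\<in>?S. ?h < s}" and ?M = "{s\<in>?S. s = ?h}"
  have fin: "finite ?S" by (simp add: S_char)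
  have nS: "n \<notin> ?S" using D by (auto simp: S_char)
  have "?h dvd n" using ev by (metis dvd_triv_right even_two_times_div_two)
  hence hgcd: "gcd ?h n = ?h" by (rule gcd_nat.absorb1)
  have M: "?M = (if ?h \<in> D then {?h} else {})"
    using hgcd n2 by (auto simp: S_char)
  have R: "?R = (\<lambda>s. n - s) ` ?L"
  proof
    show "?R \<subseteq> (\<lambda>s. n - s) ` ?L"
    proof
      fix r assume r: "r \<in> ?R"
      hence rn: "r < n" using nS by (auto simp: S_char le_less)
      have "gcd (n - r) n = gcd r n" by (rule gcd_compl1) (use rn in simp)
      hence "n - r \<in> ?L" using r rn ev by (auto simp: S_char)
      moreover have "r = n - (n - r)" using rn by simp
      ultimately show "r \<in> (\<lambda>s. n - s) ` ?L" by blast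
    qed
    show "(\<lambda>s. n - s) ` ?L \<subseteq> ?R"
    proof
      fix r assume "r \<in> (\<lambda>s. n - s) ` ?L"
      then obtain s where s: "s \<in> ?L" "r = n - s" by blast
      have "gcd (n - s) n = gcd s n" by (rule gcd_compl1) (use s in \<open>auto simp: S_char\<close>)
      thus "r \<in> ?R" using s ev by (auto simp: S_char)
    qed
  qed
  have inj: "inj_on (\<lambda>s. n - s) ?L" by (rule inj_onI) (auto simp: S_char)
  have cR: "card ?R = card ?L" using R card_image[OF inj] by simp
  have split: "?S = ?L \<union> ?R \<union> ?M" by auto
  have fL: "finite ?L" and fR: "finite ?R" and fM: "finite ?M" using fin by auto
  have "card (?L \<union> ?R \<union> ?M) = card (?L \<union> ?R) + card ?M"
    by (rule card_Un_disjoint) (use fL fR fM in auto)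
  also have "card (?L \<union> ?R) = card ?L + card ?R"
    by (rule card_Un_disjoint) (use fL fR in auto)
  finally have "card ?S = card ?L + card ?R + card ?M" using split by simp
  moreover have "card ?M = (if ?h \<in> D then 1 else 0)" unfolding M by simp
  ultimately show ?thesis using cR by linarith
qed

theorem lemma3p8:
  fixes n :: nat and D1 D2 :: "nat set"
  assumes "n \<ge> 2" and "even n"
    and "D1 \<subseteq> divisors n - {n}" and "D2 \<subseteq> divisors n - {n}"
    and "Spec (ICG_adj n D1) = Spec (ICG_adj n D2)"
  shows "n div 2 \<notin> (D1 - D2) \<union> (D2 - D1)"
proof -
  have e1: "(\<Sum>x\<in>#Spec (ICG_adj n D1). x^2) = of_nat (n * card (ICG_S n D1))"
    using Spec_sq[OF ICG_adj_carrier[of n D1]] mtr_ICG[of n D1] by simp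
  have e2: "(\<Sum>x\<in>#Spec (ICG_adj n D2). x^2) = of_nat (n * card (ICG_S n D2))"
    using Spec_sq[OF ICG_adj_carrier[of n D2]] mtr_ICG[of n D2] by simp
  have "of_nat (n * card (ICG_S n D1)) = (of_nat (n * card (ICG_S n D2)) :: complex)"
    by (simp only: e1[symmetric] e2[symmetric] assms(5))
  hence "n * card (ICG_S n D1) = n * card (ICG_S n D2)" by (simp only: of_nat_eq_iff)
  hence c: "card (ICG_S n D1) = card (ICG_S n D2)" using assms(1) by simp
  have aux: "\<And>a b x y::nat. 2*a + x = 2*b + y \<Longrightarrow> x \<le> 1 \<Longrightarrow> y \<le> 1 \<Longrightarrow> x = y"
    by presburger
  have "(if n div 2 \<in> D1 then 1 else 0::nat) = (if n div 2 \<in> D2 then 1 else 0)"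
  proof -
    have "2 * card {s\<in>ICG_S n D1. s < n div 2} + (if n div 2 \<in> D1 then 1 else 0) =
          2 * card {s\<in>ICG_S n D2. s < n div 2} + (if n div 2 \<in> D2 then 1 else 0)"
      using parity[OF assms(1,2,3)] parity[OF assms(1,2,4)] c by simp
    then show ?thesis by (rule aux) simp_all
  qed
  thus ?thesis by (auto split: if_splits)
qed
end
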